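(* For all $x_0,x_1\in\mathbb{R}^n$ and any $F'(x_1)\in\partial F(x_1)$, $$F(x_0)-F(x_1)-\langle F'(x_1),x_0-x_1\rangle\le2\left(\frac{2\|A\|^2\mathcal{D}_{v,Y}}{\sigma_v}\right)^{1/2}\|x_0-x_1\|.$$
   Context: $F(x):=\max_{y\in Y}\{\langle Ax,y\rangle-\hat g(y)\}$ for $x\in\mathbb{R}^n$, where $Y\subseteq\mathbb{R}^m$ is a nonempty convex compact set, $\hat g:Y\to\mathbb{R}$ continuous convex, $A:\mathbb{R}^n\to\mathbb{R}^m$ linear. $\mathbb{R}^n$ carries a norm $\|\cdot\|$, $\mathbb{R}^m$ a norm $\|\cdot\|_Y$, and $\|A\|:=\max\{\langle Ax,y\rangle:\|x\|\le1,\|y\|_Y\le1\}$. $v$ is a prox-function of $Y$: differentiable and strongly convex with modulus $\sigma_v$ w.r.t. $\|\cdot\|_Y$; $\mathcal{D}_{v,Y}:=\max_{y,z\in Y}\{v(y)-v(z)-\langle\nabla v(z),y-z\rangle\}$. *)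

theory Defs
  imports "HOL-Analysis.Analysis"
begin

definition is_norm :: "('a::real_vector \<Rightarrow> real) \<Rightarrow> bool" where
  "is_norm N \<longleftrightarrow> (\<forall>x. N x = 0 \<longleftrightarrow> x = 0) \<and> (\<forall>x y. N (x + y) \<le> N x + N y)
     \<and> (\<forall>c x. N (c *\<^sub>R x) = \<bar>c\<bar> * N x)"

definition op_norm_gen :: "('a \<Rightarrow> real) \<Rightarrow> ('b::real_inner \<Rightarrow> real) \<Rightarrow> ('a \<Rightarrow> 'b) \<Rightarrow> real" where
  "op_norm_gen N NY A = Sup {inner (A x) y | x y. N x \<le> 1 \<and> NY y \<le> 1}"

definition Fmax :: "('a \<Rightarrow> 'b::real_inner) \<Rightarrow> ('b \<Rightarrow> real) \<Rightarrow> 'b set \<Rightarrow> 'a \<Rightarrow> real" where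
  "Fmax A g Y x = Sup ((\<lambda>y. inner (A x) y - g y) ` Y)"

definition subdiff :: "('a::real_inner \<Rightarrow> real) \<Rightarrow> 'a \<Rightarrow> 'a set" where
  "subdiff f x = {s. \<forall>z. f x + inner s (z - x) \<le> f z}"

definition strongly_convex_on :: "'b::real_vector set \<Rightarrow> ('b \<Rightarrow> real) \<Rightarrow> real \<Rightarrow> ('b \<Rightarrow> real) \<Rightarrow> bool" where
  "strongly_convex_on Y v \<sigma> NY \<longleftrightarrow> convex Y \<and>
     (\<forall>y\<in>Y. \<forall>z\<in>Y. \<forall>t\<in>{0..1}.
        v ((1 - t) *\<^sub>R y + t *\<^sub>R z) \<le> (1 - t) * v y + t * v z - \<sigma> / 2 * t * (1 - t) * (NY (y - z))\<^sup>2)"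

definition prox_function :: "'b::real_inner set \<Rightarrow> ('b \<Rightarrow> real) \<Rightarrow> ('b \<Rightarrow> 'b) \<Rightarrow> real \<Rightarrow> ('b \<Rightarrow> real) \<Rightarrow> bool" where
  "prox_function Y v gv \<sigma> NY \<longleftrightarrow> \<sigma> > 0 \<and>
     (\<forall>z\<in>Y. (v has_derivative (\<lambda>h. inner (gv z) h)) (at z)) \<and> strongly_convex_on Y v \<sigma> NY"

definition bregman_set :: "'b::real_inner set \<Rightarrow> ('b \<Rightarrow> real) \<Rightarrow> ('b \<Rightarrow> 'b) \<Rightarrow> real set" where
  "bregman_set Y v gv = {v y - v z - inner (gv z) (y - z) | y z. y \<in> Y \<and> z \<in> Y}"

definition D_vY :: "'b::real_inner set \<Rightarrow> ('b \<Rightarrow> real) \<Rightarrow> ('b \<Rightarrow> 'b) \<Rightarrow> real" where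
  "D_vY Y v gv = Sup (bregman_set Y v gv)"

end

theory Submission
  imports Defs
begin

lemma isn_nonneg: assumes "is_norm N" shows "N x \<ge> 0"
proof -
  have "N (x + (-x)) \<le> N x + N (-x)" using assms unfolding is_norm_def by blast
  moreover have "N (-x) = N x" using assms unfolding is_norm_def
    by (metis abs_minus_cancel abs_one mult_1 scaleR_minus1_left)
  moreover have "N 0 = 0" using assms unfolding is_norm_def by blast
  ultimately show ?thesis by simp
qed

lemma isn_sum: assumes "is_norm N" "finite B" shows "N (\<Sum>b\<in>B. f b) \<le> (\<Sum>b\<in>B. N (f b))"
  using assms(2)
proof (induction B rule: finite_induct)
  case empty then show ?case using assms(1) unfolding is_norm_def by (metis order_refl sum.empty)
next
  case (insert b B)
  have "N (f b + sum f B) \<le> N (f b) + N (sum f B)" using assms(1) unfolding is_norm_def by blast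
  then show ?case using insert by simp
qed

lemma isn_upper:
  fixes N :: "'a::euclidean_space \<Rightarrow> real"
  assumes "is_norm N" shows "N x \<le> (\<Sum>b\<in>Basis. N b) * norm x"
proof -
  have "N x = N (\<Sum>b\<in>Basis. (x \<bullet> b) *\<^sub>R b)" by (simp add: euclidean_representation)
  also have "\<dots> \<le> (\<Sum>b\<in>Basis. N ((x \<bullet> b) *\<^sub>R b))" by (rule isn_sum[OF assms]) simp
  also have "\<dots> = (\<Sum>b\<in>Basis. \<bar>x \<bullet> b\<bar> * N b)" using assms unfolding is_norm_def by simp
  also have "\<dots> \<le> (\<Sum>b\<in>Basis. norm x * N b)"
    by (rule sum_mono) (simp add: Basis_le_norm isn_nonneg[OF assms] mult_right_mono)
  finally show ?thesis by (simp add: sum_distrib_left mult.commute)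
qed

lemma isn_lower:
  fixes N :: "'a::euclidean_space \<Rightarrow> real"
  assumes "is_norm N" shows "\<exists>c>0. \<forall>x. norm x \<le> c * N x"
proof -
  define B where "B = (\<Sum>b\<in>Basis. N b)"
  have lip: "\<bar>N x - N y\<bar> \<le> B * dist x y" for x y
  proof -
    have "N x \<le> N y + N (x - y)" using assms unfolding is_norm_def by (metis add.commute diff_add_cancel)
    moreover have "N y \<le> N x + N (y - x)" using assms unfolding is_norm_def by (metis add.commute diff_add_cancel)
    moreover have "N (x - y) \<le> B * dist x y" "N (y - x) \<le> B * dist x y"
      using isn_upper[OF assms, of "x-y"] isn_upper[OF assms, of "y-x"] by (auto simp: B_def dist_norm norm_minus_commute)
    ultimately show ?thesis by linarith
  qed
  have "B \<ge> 0" unfolding B_def by (simp add: sum_nonneg isn_nonneg[OF assms])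
  have cont: "continuous_on (sphere 0 1) N"
    by (rule lipschitz_on_continuous_on[where L=B], rule lipschitz_onI)
       (use lip \<open>B \<ge> 0\<close> in \<open>auto simp: dist_real_def\<close>)
  have ne: "sphere (0::'a) 1 \<noteq> {}" by simp
  obtain u where u: "u \<in> sphere 0 1" "\<forall>y\<in>sphere 0 1. N u \<le> N y"
    using continuous_attains_inf[OF compact_sphere ne cont] by blast
  have "u \<noteq> 0" using u by auto
  hence "N u \<noteq> 0" using assms unfolding is_norm_def by blast
  hence mpos: "N u > 0" using isn_nonneg[OF assms, of u] by linarith
  have "norm x \<le> (1 / N u) * N x" for x
  proof (cases "x = 0")
    case True then show ?thesis using isn_nonneg[OF assms, of 0] mpos by simp
  next
    case False
    have "x /\<^sub>R norm x \<in> sphere 0 1" using False by simp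
    hence "N u \<le> N (x /\<^sub>R norm x)" using u by blast
    also have "\<dots> = N x / norm x" using assms unfolding is_norm_def by (simp add: divide_inverse_commute)
    finally have "N u * norm x \<le> N x" using False by (simp add: field_simps)
    thus ?thesis using mpos by (simp add: field_simps mult.commute)
  qed
  thus ?thesis using mpos by (intro exI[of _ "1 / N u"]) auto
qed


lemma opn_bound:
  fixes A :: "'a::euclidean_space \<Rightarrow> 'b::euclidean_space"
  assumes N: "is_norm N" and NY: "is_norm NY" and A: "linear A"
  shows "inner (A x) y \<le> op_norm_gen N NY A * N x * NY y" and "op_norm_gen N NY A \<ge> 0"
proof -
  define S where "S = {inner (A x) y | x y. N x \<le> 1 \<and> NY y \<le> 1}"
  obtain c1 where c1: "c1 > 0" "\<And>x. norm x \<le> c1 * N x" using isn_lower[OF N] by blast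
  obtain c2 where c2: "c2 > 0" "\<And>y. norm y \<le> c2 * NY y" using isn_lower[OF NY] by blast
  obtain K where K: "K > 0" "\<And>x. norm (A x) \<le> norm x * K"
    using bounded_linear.pos_bounded[OF linear_conv_bounded_linear[THEN iffD1, OF A]] by blast
  have bdd: "bdd_above S"
  proof (rule bdd_aboveI)
    fix z assume "z \<in> S"
    then obtain x y where xy: "z = inner (A x) y" "N x \<le> 1" "NY y \<le> 1" unfolding S_def by blast
    have "z \<le> norm (A x) * norm y" using xy(1) norm_cauchy_schwarz by blast
    also have "\<dots> \<le> (norm x * K) * norm y" by (rule mult_right_mono[OF K(2)]) simp
    also have "\<dots> \<le> (c1 * K) * c2"
    proof -
      have "norm x \<le> c1" using c1(2)[of x] xy(2) c1(1) by (smt (verit) mult_left_le)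
      moreover have "norm y \<le> c2" using c2(2)[of y] xy(3) c2(1) by (smt (verit) mult_left_le)
      ultimately have "norm x * norm y \<le> c1 * c2" using c1(1) by (intro mult_mono) auto
      thus ?thesis using K(1) by (simp add: mult.commute mult.left_commute)
    qed
    finally show "z \<le> c1 * K * c2" .
  qed
  have N0: "N 0 = 0" "NY 0 = 0" using N NY unfolding is_norm_def by blast+
  have 0: "0 \<in> S" unfolding S_def
    using N0 A by (auto intro!: exI[of _ 0] simp: linear_0)
  show "op_norm_gen N NY A \<ge> 0" unfolding op_norm_gen_def S_def[symmetric]
    using cSup_upper[OF 0 bdd] .
  show "inner (A x) y \<le> op_norm_gen N NY A * N x * NY y"
  proof (cases "x = 0 \<or> y = 0")
    case True then show ?thesis using A N0 by (auto simp: linear_0)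
  next
    case False
    hence nx: "N x > 0" and ny: "NY y > 0"
      using isn_nonneg[OF N, of x] isn_nonneg[OF NY, of y] N NY unfolding is_norm_def
      by (metis less_eq_real_def)+
    have "N (x /\<^sub>R N x) = 1" using N nx False unfolding is_norm_def by (simp add: field_simps)
    moreover have "NY (y /\<^sub>R NY y) = 1" using NY ny False unfolding is_norm_def by (simp add: field_simps)
    ultimately have "inner (A (x /\<^sub>R N x)) (y /\<^sub>R NY y) \<in> S" unfolding S_def by fastforce
    hence "inner (A (x /\<^sub>R N x)) (y /\<^sub>R NY y) \<le> op_norm_gen N NY A"
      unfolding op_norm_gen_def S_def[symmetric] using cSup_upper bdd by blast
    moreover have "inner (A (x /\<^sub>R N x)) (y /\<^sub>R NY y) = inner (A x) y / (N x * NY y)"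
      using A by (simp add: linear_scale field_simps)
    ultimately have "inner (A x) y / (N x * NY y) \<le> op_norm_gen N NY A" by simp
    thus ?thesis using nx ny by (simp add: divide_le_eq mult.commute mult.left_commute)
  qed
qed


lemma breg_lower:
  fixes v :: "'b::real_inner \<Rightarrow> real"
  assumes P: "prox_function Y v gv \<sigma> NY" and NYn: "is_norm NY" and y: "y \<in> Y" and z: "z \<in> Y"
  shows "\<sigma> / 2 * (NY (y - z))\<^sup>2 \<le> v y - v z - inner (gv z) (y - z)"
proof -
  define w where "w = y - z"
  define c where "c = \<sigma> / 2 * (NY (z - y))\<^sup>2"
  have sc: "v ((1 - t) *\<^sub>R z + t *\<^sub>R y) \<le> (1 - t) * v z + t * v y - c * t * (1 - t)"
    if "t \<in> {0..1}" for t
  proof -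
    have "v ((1 - t) *\<^sub>R z + t *\<^sub>R y) \<le> (1 - t) * v z + t * v y - \<sigma> / 2 * t * (1 - t) * (NY (z - y))\<^sup>2"
      using P y z that unfolding prox_function_def strongly_convex_on_def by blast
    thus ?thesis unfolding c_def by (simp add: algebra_simps)
  qed
  have dv: "(v has_derivative (\<lambda>h. inner (gv z) h)) (at z)" using P z unfolding prox_function_def by blast
  have dl: "((\<lambda>t::real. z + t *\<^sub>R w) has_derivative (\<lambda>t. t *\<^sub>R w)) (at 0)"
    by (auto intro!: derivative_eq_intros)
  have "((\<lambda>t::real. v (z + t *\<^sub>R w)) has_derivative (\<lambda>t. inner (gv z) (t *\<^sub>R w))) (at 0)"
    using diff_chain_at[OF dl, of v] dv by (simp add: o_def del: inner_scaleR_right)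
  hence "((\<lambda>t::real. v (z + t *\<^sub>R w)) has_real_derivative (inner (gv z) w)) (at 0)"
    unfolding has_field_derivative_def by (simp add: mult.commute[of _ "gv z \<bullet> w"])
  hence "((\<lambda>t. (v (z + t *\<^sub>R w) - v (z + 0 *\<^sub>R w)) / (t - 0)) \<longlongrightarrow> inner (gv z) w) (at 0)"
    unfolding has_field_derivative_iff .
  hence lim1: "((\<lambda>t. (v (z + t *\<^sub>R w) - v z) / t) \<longlongrightarrow> inner (gv z) w) (at_right 0)"
    by (simp add: filterlim_at_split)
  have lim2: "((\<lambda>t::real. v y - v z - c * (1 - t)) \<longlongrightarrow> v y - v z - c * (1 - 0)) (at_right 0)"
    by (intro tendsto_intros)
  have ev: "\<forall>\<^sub>F t in at_right 0. (v (z + t *\<^sub>R w) - v z) / t \<le> v y - v z - c * (1 - t)"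
  proof -
    have "\<forall>\<^sub>F t in at_right (0::real). t \<in> {0<..<1}" by (rule eventually_at_right_real) simp
    thus ?thesis
    proof (rule eventually_mono)
      fix t :: real assume t: "t \<in> {0<..<1}"
      have "z + t *\<^sub>R w = (1 - t) *\<^sub>R z + t *\<^sub>R y" by (simp add: w_def algebra_simps)
      hence "v (z + t *\<^sub>R w) = v ((1 - t) *\<^sub>R z + t *\<^sub>R y)" by simp
      hence "v (z + t *\<^sub>R w) - v z \<le> t * (v y - v z - c * (1 - t))"
        using sc[of t] t by (simp add: algebra_simps del: scaleR_diff_left)
      thus "(v (z + t *\<^sub>R w) - v z) / t \<le> v y - v z - c * (1 - t)"
        using t by (simp add: divide_le_eq mult.commute)
    qed
  qed
  have "inner (gv z) w \<le> v y - v z - c * (1 - 0)"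
    by (rule tendsto_le[OF _ lim2 lim1 ev]) simp
  moreover have "NY (z - y) = NY (y - z)"
  proof -
    have "z - y = (-1) *\<^sub>R (y - z)" by simp
    moreover have "NY ((-1) *\<^sub>R (y - z)) = NY (y - z)"
      using NYn unfolding is_norm_def by (metis abs_minus_cancel abs_one mult_1)
    ultimately show ?thesis by simp
  qed
  ultimately show ?thesis by (simp add: c_def w_def)
qed


theorem lemma4p6:
  fixes A :: "real^'n \<Rightarrow> real^'m" and g :: "real^'m \<Rightarrow> real" and Y :: "(real^'m) set"
    and N :: "real^'n \<Rightarrow> real" and NY :: "real^'m \<Rightarrow> real"
    and v :: "real^'m \<Rightarrow> real" and gv :: "real^'m \<Rightarrow> real^'m" and \<sigma> :: real
    and x0 x1 s :: "real^'n"
  assumes "Y \<noteq> {}" and "convex Y" and "compact Y"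
    and "continuous_on Y g" and "convex_on Y g"
    and "linear A"
    and "is_norm N" and "is_norm NY"
    and "prox_function Y v gv \<sigma> NY"
    and "bdd_above (bregman_set Y v gv)"
    and "s \<in> subdiff (Fmax A g Y) x1"
  shows "Fmax A g Y x0 - Fmax A g Y x1 - inner s (x0 - x1)
           \<le> 2 * sqrt (2 * (op_norm_gen N NY A)\<^sup>2 * D_vY Y v gv / \<sigma>) * N (x0 - x1)"
proof -
  define F where "F = Fmax A g Y"
  have maxi: "\<exists>y\<in>Y. F x = inner (A x) y - g y \<and> (\<forall>y'\<in>Y. inner (A x) y' - g y' \<le> F x)" for x
  proof -
    have c: "continuous_on Y (\<lambda>y. inner (A x) y - g y)"
      by (intro continuous_intros assms(4))
    obtain y where y: "y \<in> Y" "\<forall>y'\<in>Y. inner (A x) y' - g y' \<le> inner (A x) y - g y"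
      using continuous_attains_sup[OF assms(3) assms(1) c] by blast
    have "F x = inner (A x) y - g y" unfolding F_def Fmax_def
      by (rule cSup_eq_maximum) (use y in auto)
    thus ?thesis using y by auto
  qed
  define d where "d = x0 - x1"
  define x2 where "x2 = x1 - d"
  obtain y0 where y0: "y0 \<in> Y" "F x0 = inner (A x0) y0 - g y0" using maxi by blast
  obtain y2 where y2: "y2 \<in> Y" "F x2 = inner (A x2) y2 - g y2" using maxi by blast
  have f1a: "inner (A x1) y0 - g y0 \<le> F x1" and f1b: "inner (A x1) y2 - g y2 \<le> F x1"
    using maxi[of x1] y0 y2 by auto
  have sub: "F x1 + inner s (x2 - x1) \<le> F x2" using assms(11) unfolding subdiff_def F_def by blast
  have Ax0: "A x0 = A x1 + A d" and Ax2: "A x2 = A x1 - A d"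
  proof -
    have "x0 = x1 + d" unfolding d_def by simp
    thus "A x0 = A x1 + A d" using assms(6) by (simp add: linear_add)
    show "A x2 = A x1 - A d" unfolding x2_def using assms(6) by (rule linear_diff)
  qed
  have key: "F x0 - F x1 - inner s d \<le> inner (A d) (y0 - y2)"
  proof -
    have e1: "x2 - x1 = - d" unfolding x2_def by simp
    have "F x1 - inner s d \<le> inner (A x1) y2 - inner (A d) y2 - g y2"
      using sub y2(2) unfolding e1 Ax2 by (simp add: inner_diff_left)
    moreover have "F x0 = inner (A x1) y0 + inner (A d) y0 - g y0" using y0(2) Ax0 by (simp add: inner_add_left)
    ultimately show ?thesis using f1a f1b by (simp add: inner_diff_right)
  qed
  define L where "L = op_norm_gen N NY A"
  define D where "D = D_vY Y v gv"
  have sig: "\<sigma> > 0" using assms(9) unfolding prox_function_def by blast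
  have L0: "L \<ge> 0" unfolding L_def by (rule opn_bound(2)[OF assms(7,8,6)])
  have ip: "inner (A d) (y0 - y2) \<le> L * N d * NY (y0 - y2)"
    unfolding L_def by (rule opn_bound(1)[OF assms(7,8,6)])
  have br: "v y0 - v y2 - inner (gv y2) (y0 - y2) \<le> D"
    unfolding D_def D_vY_def using y0(1) y2(1)
    by (intro cSup_upper[OF _ assms(10)]) (auto simp: bregman_set_def)
  have "\<sigma> / 2 * (NY (y0 - y2))\<^sup>2 \<le> D"
    using breg_lower[OF assms(9,8) y0(1) y2(1)] br by linarith
  hence "(NY (y0 - y2))\<^sup>2 \<le> 2 * D / \<sigma>" using sig by (simp add: field_simps)
  hence ny: "NY (y0 - y2) \<le> sqrt (2 * D / \<sigma>)"
    using isn_nonneg[OF assms(8)] real_le_rsqrt by blast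
  have Nd: "N d \<ge> 0" by (rule isn_nonneg[OF assms(7)])
  have "L * N d * NY (y0 - y2) \<le> L * N d * sqrt (2 * D / \<sigma>)"
    using ny L0 Nd by (simp add: mult_left_mono)
  also have "\<dots> = sqrt (2 * L\<^sup>2 * D / \<sigma>) * N d"
    using L0 by (simp add: real_sqrt_mult real_sqrt_divide)
  also have "\<dots> \<le> 2 * sqrt (2 * L\<^sup>2 * D / \<sigma>) * N d"
  proof -
    have "v y0 - v y0 - inner (gv y0) (y0 - y0) \<le> D"
      unfolding D_def D_vY_def using y0(1)
      by (intro cSup_upper[OF _ assms(10)]) (unfold bregman_set_def, blast)
    hence "D \<ge> 0" by simp
    hence "sqrt (2 * L\<^sup>2 * D / \<sigma>) \<ge> 0" using sig by simp
    thus ?thesis using Nd by (simp add: mult_right_mono)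
  qed
  finally show ?thesis using key ip unfolding F_def L_def D_def d_def by linarith
qed

end
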